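(* Let $R$ be a commutative ring, $L$ an $R$-module and $S\subseteq L$ a subset. Then the subset module closure $\mathrm{cl}_{S,L}$, as a pair operation on all pairs $N\subseteq M$ of $R$-modules, is functorial and residual.
   Context: For $R$-modules $N\subseteq M$, $N^{\mathrm{cl}_{S,L}}_M=\{u\in M:\ s\otimes u\in\operatorname{im}(L\otimes_R N\to L\otimes_R M)\text{ for all } s\in S\}$, the map induced by the inclusion $N\hookrightarrow M$. A pair operation $p$ (here $p(N,M)=N^{\mathrm{cl}_{S,L}}_M$) is functorial if $g(p(N,M))\subseteq p(g(N),M')$ for every $R$-linear map $g:M\to M'$ and submodule $N\subseteq M$; it is residual if $p(N,M)=\pi^{-1}(p(N/P,M/P))$ whenever $P\subseteq N\subseteq M$, where $\pi:M\to M/P$ is the quotient map. *)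

theory Defs
  imports "HOL-Algebra.Algebra"
begin

text \<open>Finite R-linear combinations of a set G of formal (coefficient) functions
  'k \<Rightarrow> 'a; the R-submodule of the free module R^('k) generated by G.\<close>
inductive_set rspan :: "('a, 'x) ring_scheme \<Rightarrow> ('k \<Rightarrow> 'a) set \<Rightarrow> ('k \<Rightarrow> 'a) set"
  for R G where
  zero: "(\<lambda>_. \<zero>\<^bsub>R\<^esub>) \<in> rspan R G"
| gen: "g \<in> G \<Longrightarrow> g \<in> rspan R G"
| add: "f \<in> rspan R G \<Longrightarrow> g \<in> rspan R G \<Longrightarrow> (\<lambda>k. f k \<oplus>\<^bsub>R\<^esub> g k) \<in> rspan R G"
| smult: "r \<in> carrier R \<Longrightarrow> f \<in> rspan R G \<Longrightarrow> (\<lambda>k. r \<otimes>\<^bsub>R\<^esub> f k) \<in> rspan R G"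

text \<open>The basis vector of the free module on pairs (l,m): the formal symbol l \<otimes> m.\<close>
definition fbasis :: "('a, 'x) ring_scheme \<Rightarrow> 'l \<Rightarrow> 'm \<Rightarrow> ('l \<times> 'm \<Rightarrow> 'a)" where
  "fbasis R l m = (\<lambda>k. if k = (l, m) then \<one>\<^bsub>R\<^esub> else \<zero>\<^bsub>R\<^esub>)"

definition fdiff :: "('a, 'x) ring_scheme \<Rightarrow> ('k \<Rightarrow> 'a) \<Rightarrow> ('k \<Rightarrow> 'a) \<Rightarrow> ('k \<Rightarrow> 'a)" where
  "fdiff R f g = (\<lambda>k. f k \<ominus>\<^bsub>R\<^esub> g k)"

definition fscale :: "('a, 'x) ring_scheme \<Rightarrow> 'a \<Rightarrow> ('k \<Rightarrow> 'a) \<Rightarrow> ('k \<Rightarrow> 'a)" where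
  "fscale R r f = (\<lambda>k. r \<otimes>\<^bsub>R\<^esub> f k)"

text \<open>The bilinearity relations in the free module on carrier L \<times> carrier M; the
  tensor product L \<otimes>_R M is the free module on carrier L \<times> carrier M modulo
  the span of these relations.\<close>
definition tensor_rels ::
  "('a, 'x) ring_scheme \<Rightarrow> ('a, 'l, 'y) module_scheme \<Rightarrow> ('a, 'm, 'z) module_scheme
     \<Rightarrow> ('l \<times> 'm \<Rightarrow> 'a) set" where
  "tensor_rels R L M =
     {fdiff R (fdiff R (fbasis R (l \<oplus>\<^bsub>L\<^esub> l') m) (fbasis R l m)) (fbasis R l' m)
        | l l' m. l \<in> carrier L \<and> l' \<in> carrier L \<and> m \<in> carrier M}
   \<union> {fdiff R (fdiff R (fbasis R l (m \<oplus>\<^bsub>M\<^esub> m')) (fbasis R l m)) (fbasis R l m')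
        | l m m'. l \<in> carrier L \<and> m \<in> carrier M \<and> m' \<in> carrier M}
   \<union> {fdiff R (fbasis R (r \<odot>\<^bsub>L\<^esub> l) m) (fscale R r (fbasis R l m))
        | r l m. r \<in> carrier R \<and> l \<in> carrier L \<and> m \<in> carrier M}
   \<union> {fdiff R (fbasis R l (r \<odot>\<^bsub>M\<^esub> m)) (fscale R r (fbasis R l m))
        | r l m. r \<in> carrier R \<and> l \<in> carrier L \<and> m \<in> carrier M}"

text \<open>For N \<subseteq> M: the element s \<otimes> u of L \<otimes>_R M lies in the image of
  L \<otimes>_R N \<rightarrow> L \<otimes>_R M. That image is the submodule generated by the classes of
  the symbols l \<otimes> n (l \<in> L, n \<in> N), so membership means that the formal symbol
  s \<otimes> u lies in (span of those symbols) + (span of the relations).\<close>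
definition tensor_in_image ::
  "('a, 'x) ring_scheme \<Rightarrow> ('a, 'l, 'y) module_scheme \<Rightarrow> 'm set \<Rightarrow> ('a, 'm, 'z) module_scheme
     \<Rightarrow> 'l \<Rightarrow> 'm \<Rightarrow> bool" where
  "tensor_in_image R L N M s u \<longleftrightarrow>
     fbasis R s u \<in> rspan R ({fbasis R l n | l n. l \<in> carrier L \<and> n \<in> N} \<union> tensor_rels R L M)"

definition subset_cl ::
  "('a, 'x) ring_scheme \<Rightarrow> ('a, 'l, 'y) module_scheme \<Rightarrow> 'l set \<Rightarrow> 'm set
     \<Rightarrow> ('a, 'm, 'z) module_scheme \<Rightarrow> 'm set" where
  "subset_cl R L S N M = {u \<in> carrier M. \<forall>s \<in> S. tensor_in_image R L N M s u}"

definition rlinear ::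
  "('a, 'x) ring_scheme \<Rightarrow> ('a, 'm, 'y) module_scheme \<Rightarrow> ('a, 'n, 'z) module_scheme
     \<Rightarrow> ('m \<Rightarrow> 'n) \<Rightarrow> bool" where
  "rlinear R M M' g \<longleftrightarrow> g \<in> carrier M \<rightarrow> carrier M'
     \<and> (\<forall>x \<in> carrier M. \<forall>y \<in> carrier M. g (x \<oplus>\<^bsub>M\<^esub> y) = g x \<oplus>\<^bsub>M'\<^esub> g y)
     \<and> (\<forall>r \<in> carrier R. \<forall>x \<in> carrier M. g (r \<odot>\<^bsub>M\<^esub> x) = r \<odot>\<^bsub>M'\<^esub> g x)"

text \<open>Quotient module M/P (elements are additive cosets P +> x); only the
  module structure (carrier, zero, add, smult) is meaningful.\<close>
definition quot_module ::
  "('a, 'x) ring_scheme \<Rightarrow> ('a, 'm, 'z) module_scheme \<Rightarrow> 'm set \<Rightarrow> ('a, 'm set) module" where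
  "quot_module R M P =
     \<lparr>carrier = a_rcosets\<^bsub>M\<^esub> P, monoid.mult = (\<lambda>_ _. P), monoid.one = P, ring.zero = P,
      ring.add = set_add M,
      module.smult = (\<lambda>r C. \<Union>x\<in>C. a_r_coset M P (r \<odot>\<^bsub>M\<^esub> x))\<rparr>"

end

theory Submission
  imports Defs
begin
lemma rspan_sub:
  assumes "G \<subseteq> rspan R H" and "f \<in> rspan R G"
  shows "f \<in> rspan R H"
  using assms(2) by induction (use assms(1) in \<open>auto intro: rspan.intros\<close>)

lemma rspan_map:
  fixes \<Phi> :: "('k \<Rightarrow> 'a) \<Rightarrow> ('j \<Rightarrow> 'a)"
  assumes z: "\<Phi> (\<lambda>_. \<zero>\<^bsub>R\<^esub>) = (\<lambda>_. \<zero>\<^bsub>R\<^esub>)" "Q (\<lambda>_. \<zero>\<^bsub>R\<^esub>)"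
    and g: "\<And>h. h \<in> H \<Longrightarrow> \<Phi> h \<in> rspan R H' \<and> Q h"
    and a: "\<And>f g. Q f \<Longrightarrow> Q g \<Longrightarrow> \<Phi> (\<lambda>k. f k \<oplus>\<^bsub>R\<^esub> g k) = (\<lambda>k. \<Phi> f k \<oplus>\<^bsub>R\<^esub> \<Phi> g k)
            \<and> Q (\<lambda>k. f k \<oplus>\<^bsub>R\<^esub> g k)"
    and s: "\<And>r f. r \<in> carrier R \<Longrightarrow> Q f \<Longrightarrow> \<Phi> (\<lambda>k. r \<otimes>\<^bsub>R\<^esub> f k) = (\<lambda>k. r \<otimes>\<^bsub>R\<^esub> \<Phi> f k)
            \<and> Q (\<lambda>k. r \<otimes>\<^bsub>R\<^esub> f k)"
    and f: "f \<in> rspan R H"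
  shows "\<Phi> f \<in> rspan R H' \<and> Q f"
  using f
proof induction
  case zero then show ?case using z by (simp add: rspan.zero)
next
  case (gen g) then show ?case using g by blast
next
  case (add f g) then show ?case using a[of f g] by (simp add: rspan.add)
next
  case (smult r f) then show ?case using s[of r f] by (simp add: rspan.smult)
qed

lemma rspan_fdiff:
  fixes R (structure)
  assumes "ring R" "f \<in> rspan R H" "g \<in> rspan R H"
    and "\<And>k. f k \<in> carrier R" "\<And>k. g k \<in> carrier R"
  shows "fdiff R f g \<in> rspan R H"
proof -
  interpret ring R by fact
  have "fdiff R f g = (\<lambda>k. f k \<oplus> ((\<ominus> \<one>) \<otimes> g k))"
    using assms(4,5) by (simp add: fdiff_def fun_eq_iff a_minus_def l_minus)
  then show ?thesis using assms(2,3) by (simp add: rspan.intros)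
qed

lemma rspan_fscale:
  assumes "r \<in> carrier R" "f \<in> rspan R H"
  shows "fscale R r f \<in> rspan R H"
  using assms by (simp add: fscale_def rspan.intros)

definition cvals :: "('a, 'x) ring_scheme \<Rightarrow> ('k \<Rightarrow> 'a) \<Rightarrow> bool" where
  "cvals R f \<longleftrightarrow> (\<forall>k. f k \<in> carrier R)"

lemma rspan_cvals:
  assumes "ring R" "\<And>h. h \<in> H \<Longrightarrow> cvals R h" "f \<in> rspan R H"
  shows "cvals R f"
proof -
  interpret ring R by fact
  show ?thesis using assms(3) by induction (use assms(2) in \<open>auto simp: cvals_def\<close>)
qed

lemma cvals_fbasis: "ring R \<Longrightarrow> cvals R (fbasis R l m)"
  by (simp add: cvals_def fbasis_def ring.ring_simprules)
lemma cvals_fdiff: "ring R \<Longrightarrow> cvals R f \<Longrightarrow> cvals R g \<Longrightarrow> cvals R (fdiff R f g)"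
  by (simp add: cvals_def fdiff_def ring.ring_simprules)
lemma cvals_fscale: "ring R \<Longrightarrow> r \<in> carrier R \<Longrightarrow> cvals R f \<Longrightarrow> cvals R (fscale R r f)"
  by (simp add: cvals_def fscale_def ring.ring_simprules)

lemma cvals_rels: "ring R \<Longrightarrow> h \<in> tensor_rels R L M \<Longrightarrow> cvals R h"
  unfolding tensor_rels_def
  by (auto intro!: cvals_fdiff cvals_fscale cvals_fbasis)

lemma cvals_gens: "ring R \<Longrightarrow> h \<in> {fbasis R l n | l n. l \<in> carrier L \<and> n \<in> N} \<union> tensor_rels R L M \<Longrightarrow> cvals R h"
  using cvals_rels[of R h L M] cvals_fbasis[of R] by auto

definition rep :: "'m set \<Rightarrow> 'm" where "rep C = (SOME x. x \<in> C)"


lemma asub: "module R M \<Longrightarrow> submodule P R M \<Longrightarrow> abelian_subgroup P M"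
  by (intro abelian_subgroupI3 additive_subgroup.intro submodule.axioms(1)) (auto intro: module.axioms(2))

lemma cos_elem:
  fixes M (structure)
  shows "y \<in> P +> x \<Longrightarrow> \<exists>p\<in>P. y = p \<oplus> x"
  by (auto simp: a_r_coset_def')

lemma cos_rep:
  fixes M (structure)
  assumes "module R M" "submodule P R M" "x \<in> carrier M"
  shows "rep (P +> x) \<in> P +> x" "P +> rep (P +> x) = P +> x" "rep (P +> x) \<in> carrier M"
proof -
  interpret S: abelian_subgroup P M using asub assms(1,2) .
  have "x \<in> P +> x" using S.a_rcos_self assms(3) by blast
  then show 1: "rep (P +> x) \<in> P +> x" unfolding rep_def by (rule someI)
  show "P +> rep (P +> x) = P +> x" using S.a_repr_independence'[OF 1 assms(3)] by (rule sym)
  show "rep (P +> x) \<in> carrier M" using 1 assms(3) S.a_elemrcos_carrier by blast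
qed

lemma cos_carrier:
  fixes M (structure)
  shows "C \<in> a_rcosets P \<Longrightarrow> \<exists>x\<in>carrier M. C = P +> x"
  by (auto simp: A_RCOSETS_def')

lemma cos_in:
  fixes M (structure)
  shows "x \<in> carrier M \<Longrightarrow> P +> x \<in> a_rcosets P"
  by (auto simp: A_RCOSETS_def')

lemma cos_sum:
  fixes M (structure)
  shows "module R M \<Longrightarrow> submodule P R M \<Longrightarrow> x \<in> carrier M \<Longrightarrow> y \<in> carrier M \<Longrightarrow> (P +> x) <+> (P +> y) = P +> (x \<oplus> y)"
  by (rule abelian_subgroup.a_rcos_sum[OF asub])

lemma cos_smult:
  fixes M (structure)
  assumes "module R M" "submodule P R M" "x \<in> carrier M" "r \<in> carrier R"
  shows "(\<Union>y\<in>P +> x. P +> (r \<odot> y)) = P +> (r \<odot> x)"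
proof -
  interpret S: abelian_subgroup P M using asub assms(1,2) .
  have sub: "P \<subseteq> carrier M" using S.a_subset .
  have eq: "P +> (r \<odot> y) = P +> (r \<odot> x)" if yP: "y \<in> P +> x" for y
  proof -
    obtain p where p: "p \<in> P" "y = p \<oplus> x" using cos_elem[OF yP] by blast
    have pc: "p \<in> carrier M" using p(1) sub by blast
    have "r \<odot> y = r \<odot> p \<oplus> r \<odot> x" unfolding p(2) using module.smult_r_distr[OF assms(1) assms(4) pc assms(3)] .
    moreover have "r \<odot> p \<in> P" using submodule.smult_closed[OF assms(2) assms(4) p(1)] .
    ultimately have "r \<odot> y \<in> P +> (r \<odot> x)" unfolding a_r_coset_def' by blast
    from S.a_repr_independence'[OF this module.smult_closed[OF assms(1) assms(4,3)]] show ?thesis by (rule sym)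
  qed
  have xx: "x \<in> P +> x" using S.a_rcos_self assms(3) by blast
  show ?thesis
  proof
    show "(\<Union>y\<in>P +> x. P +> (r \<odot> y)) \<subseteq> P +> (r \<odot> x)" using eq by blast
    show "P +> (r \<odot> x) \<subseteq> (\<Union>y\<in>P +> x. P +> (r \<odot> y))" using xx by blast
  qed
qed

lemma (in ring) id1:
  assumes "b1 \<in> carrier R" "bp \<in> carrier R" "bz \<in> carrier R" "bx \<in> carrier R" "by \<in> carrier R"
  shows "(b1 \<ominus> bx) \<ominus> by = (((b1 \<ominus> bp) \<ominus> bz) \<oplus> bp) \<oplus> ((bz \<ominus> bx) \<ominus> by)"
  using assms by algebra

lemma (in ring) id2:
  assumes "b1 \<in> carrier R" "bp \<in> carrier R" "bw \<in> carrier R" "c \<in> carrier R"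
  shows "b1 \<ominus> c = (((b1 \<ominus> bp) \<ominus> bw) \<oplus> bp) \<oplus> (bw \<ominus> c)"
  using assms by algebra

lemma (in ring) id3:
  assumes "a \<in> carrier R" "b \<in> carrier R" "c \<in> carrier R"
  shows "c = (a \<ominus> b) \<ominus> ((a \<ominus> b) \<ominus> c)"
  using assms by algebra

definition lift :: "('a, 'x) ring_scheme \<Rightarrow> ('a, 'm, 'z) module_scheme \<Rightarrow> 'm set
   \<Rightarrow> ('l \<times> 'm set \<Rightarrow> 'a) \<Rightarrow> ('l \<times> 'm \<Rightarrow> 'a)" where
  "lift R M P f = (\<lambda>k. if snd k \<in> carrier M \<and> snd k = rep (P +>\<^bsub>M\<^esub> snd k)
      then f (fst k, P +>\<^bsub>M\<^esub> snd k) else \<zero>\<^bsub>R\<^esub>)"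

lemma quot_simps:
  "carrier (quot_module R M P) = a_rcosets\<^bsub>M\<^esub> P"
  "add (quot_module R M P) = set_add M"
  "smult (quot_module R M P) = (\<lambda>r C. \<Union>x\<in>C. P +>\<^bsub>M\<^esub> (r \<odot>\<^bsub>M\<^esub> x))"
  by (simp_all add: quot_module_def)

lemma lift_add: "ring R \<Longrightarrow> lift R M P (\<lambda>k. f k \<oplus>\<^bsub>R\<^esub> g k) = (\<lambda>k. lift R M P f k \<oplus>\<^bsub>R\<^esub> lift R M P g k)"
  by (auto simp: lift_def fun_eq_iff ring.ring_simprules)

lemma lift_smult: "ring R \<Longrightarrow> r \<in> carrier R \<Longrightarrow> lift R M P (\<lambda>k. r \<otimes>\<^bsub>R\<^esub> f k) = (\<lambda>k. r \<otimes>\<^bsub>R\<^esub> lift R M P f k)"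
  by (auto simp: lift_def fun_eq_iff ring.ring_simprules)

lemma lift_zero: "lift R M P (\<lambda>_. \<zero>\<^bsub>R\<^esub>) = (\<lambda>_. \<zero>\<^bsub>R\<^esub>)"
  by (auto simp: lift_def fun_eq_iff)

lemma lift_fdiff: "ring R \<Longrightarrow> lift R M P (fdiff R f g) = fdiff R (lift R M P f) (lift R M P g)"
  by (auto simp: lift_def fdiff_def fun_eq_iff ring.ring_simprules)

lemma lift_fscale: "ring R \<Longrightarrow> r \<in> carrier R \<Longrightarrow> lift R M P (fscale R r f) = fscale R r (lift R M P f)"
  by (auto simp: lift_def fscale_def fun_eq_iff ring.ring_simprules)

lemma rcos_rep:
  fixes M (structure)
  assumes "module R M" "submodule P R M" "C \<in> a_rcosets P"
  shows "rep C \<in> carrier M" "C = P +> rep C"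
proof -
  obtain x where x: "x \<in> carrier M" "C = P +> x" using cos_carrier[OF assms(3)] by blast
  show "rep C \<in> carrier M" "C = P +> rep C" using cos_rep[OF assms(1,2) x(1)] x(2) by auto
qed

lemma lift_fbasis:
  assumes "module R M" "submodule P R M" "C \<in> a_rcosets\<^bsub>M\<^esub> P"
  shows "lift R M P (fbasis R l C) = fbasis R l (rep C)"
proof -
  note rc = rcos_rep[OF assms]
  have "lift R M P (fbasis R l C) (l', m) = fbasis R l (rep C) (l', m)" for l' m
  proof (cases "m = rep C")
    case True
    then show ?thesis using rc by (auto simp: lift_def fbasis_def)
  next
    case False
    have "\<not> (m \<in> carrier M \<and> m = rep (P +>\<^bsub>M\<^esub> m) \<and> P +>\<^bsub>M\<^esub> m = C)" using False by auto
    then show ?thesis using False by (auto simp: lift_def fbasis_def)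
  qed
  then show ?thesis by (auto simp: fun_eq_iff)
qed

lemma lift_gen:
  assumes R: "cring R" and M: "module R M" and P: "submodule P R M" and N: "submodule N R M"
    and PN: "P \<subseteq> N"
    and h: "h \<in> {fbasis R l n | l n. l \<in> carrier L \<and> n \<in> (\<lambda>n. P +>\<^bsub>M\<^esub> n) ` N}
              \<union> tensor_rels R L (quot_module R M P)"
  shows "lift R M P h \<in> rspan R ({fbasis R l n | l n. l \<in> carrier L \<and> n \<in> N} \<union> tensor_rels R L M)"
    (is "_ \<in> ?T")
proof -
  interpret cring R by fact
  have rR: "ring R" by (rule ring_axioms)
  have Nsub: "N \<subseteq> carrier M" using N by (rule submodule.axioms(1)[THEN subgroup.subset, simplified])
  have Psub: "P \<subseteq> carrier M" using Nsub PN by blast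
  have inG: "fbasis R l n \<in> ?T" if "l \<in> carrier L" "n \<in> N" for l n
    using that by (intro rspan.gen) blast
  have inR: "x \<in> ?T" if "x \<in> tensor_rels R L M" for x
    using that by (intro rspan.gen) blast
  have cv: "cvals R x" if "x \<in> ?T" for x
    by (rule rspan_cvals[OF rR _ that]) (rule cvals_gens[OF rR])
  have sumrel: "fdiff R (fdiff R (fbasis R l (a \<oplus>\<^bsub>M\<^esub> b)) (fbasis R l a)) (fbasis R l b) \<in> ?T"
    if "l \<in> carrier L" "a \<in> carrier M" "b \<in> carrier M" for l a b
    using that by (intro inR) (unfold tensor_rels_def, blast)
  have comb: "(\<lambda>k. (A k \<oplus>\<^bsub>R\<^esub> B k) \<oplus>\<^bsub>R\<^esub> C k) \<in> ?T" if "A \<in> ?T" "B \<in> ?T" "C \<in> ?T" for A B C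
    using that by (intro rspan.add)
  have repc: "\<exists>x. x \<in> carrier M \<and> C = P +>\<^bsub>M\<^esub> x \<and> rep C = x" if "C \<in> a_rcosets\<^bsub>M\<^esub> P" for C
    using rcos_rep[OF M P that] by blast
  have repcos: "\<exists>p\<in>P. rep (P +>\<^bsub>M\<^esub> z) = p \<oplus>\<^bsub>M\<^esub> z" if "z \<in> carrier M" for z
    by (rule cos_elem[OF cos_rep(1)[OF M P that]])
  from h consider
      (G) l n where "h = fbasis R l (P +>\<^bsub>M\<^esub> n)" "l \<in> carrier L" "n \<in> N"
    | (R1) l l' C where "h = fdiff R (fdiff R (fbasis R (l \<oplus>\<^bsub>L\<^esub> l') C) (fbasis R l C)) (fbasis R l' C)"
        "l \<in> carrier L" "l' \<in> carrier L" "C \<in> a_rcosets\<^bsub>M\<^esub> P"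
    | (R2) l C C' where "h = fdiff R (fdiff R (fbasis R l (C <+>\<^bsub>M\<^esub> C')) (fbasis R l C)) (fbasis R l C')"
        "l \<in> carrier L" "C \<in> a_rcosets\<^bsub>M\<^esub> P" "C' \<in> a_rcosets\<^bsub>M\<^esub> P"
    | (R3) r l C where "h = fdiff R (fbasis R (r \<odot>\<^bsub>L\<^esub> l) C) (fscale R r (fbasis R l C))"
        "r \<in> carrier R" "l \<in> carrier L" "C \<in> a_rcosets\<^bsub>M\<^esub> P"
    | (R4) r l C where "h = fdiff R (fbasis R l (\<Union>y\<in>C. P +>\<^bsub>M\<^esub> (r \<odot>\<^bsub>M\<^esub> y))) (fscale R r (fbasis R l C))"
        "r \<in> carrier R" "l \<in> carrier L" "C \<in> a_rcosets\<^bsub>M\<^esub> P"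
    using h unfolding tensor_rels_def quot_simps by (elim UnE CollectE exE conjE imageE; blast)
  then show ?thesis
  proof cases
    case G
    obtain p where p: "p \<in> P" "rep (P +>\<^bsub>M\<^esub> n) = p \<oplus>\<^bsub>M\<^esub> n" using repcos[of n] G Nsub by blast
    have "p \<oplus>\<^bsub>M\<^esub> n \<in> N"
      using submodule.axioms(1)[OF N, THEN subgroup.m_closed] p PN G by auto
    have nc: "n \<in> carrier M" using G Nsub by blast
    have "lift R M P h = fbasis R l (p \<oplus>\<^bsub>M\<^esub> n)"
      unfolding G(1) lift_fbasis[OF M P cos_in[OF nc]] p(2) ..
    then show ?thesis using inG G(2) \<open>p \<oplus>\<^bsub>M\<^esub> n \<in> N\<close> by simp
  next
    case R1
    obtain x where x: "x \<in> carrier M" "C = P +>\<^bsub>M\<^esub> x" "rep C = x" using repc R1 by blast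
    have "lift R M P h = fdiff R (fdiff R (fbasis R (l \<oplus>\<^bsub>L\<^esub> l') x) (fbasis R l x)) (fbasis R l' x)"
      using R1 x by (simp add: lift_fdiff[OF rR] lift_fbasis[OF M P])
    moreover have "\<dots> \<in> ?T" using R1 x by (intro inR) (unfold tensor_rels_def, blast)
    ultimately show ?thesis by simp
  next
    case R3
    obtain x where x: "x \<in> carrier M" "C = P +>\<^bsub>M\<^esub> x" "rep C = x" using repc R3 by blast
    have "lift R M P h = fdiff R (fbasis R (r \<odot>\<^bsub>L\<^esub> l) x) (fscale R r (fbasis R l x))"
      using R3 x by (simp add: lift_fdiff[OF rR] lift_fscale[OF rR] lift_fbasis[OF M P])
    moreover have "\<dots> \<in> ?T" using R3 x by (intro inR) (unfold tensor_rels_def, blast)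
    ultimately show ?thesis by simp
  next
    case R2
    obtain x where x: "x \<in> carrier M" "C = P +>\<^bsub>M\<^esub> x" "rep C = x" using repc R2 by blast
    obtain y where y: "y \<in> carrier M" "C' = P +>\<^bsub>M\<^esub> y" "rep C' = y" using repc R2 by blast
    have z: "x \<oplus>\<^bsub>M\<^esub> y \<in> carrier M" using abelian_monoid.a_closed[OF abelian_group.axioms(1)[OF module.axioms(2)[OF M]] x(1) y(1)] .
    have s: "C <+>\<^bsub>M\<^esub> C' = P +>\<^bsub>M\<^esub> (x \<oplus>\<^bsub>M\<^esub> y)" using cos_sum[OF M P x(1) y(1)] x y by simp
    obtain p where p: "p \<in> P" "rep (P +>\<^bsub>M\<^esub> (x \<oplus>\<^bsub>M\<^esub> y)) = p \<oplus>\<^bsub>M\<^esub> (x \<oplus>\<^bsub>M\<^esub> y)"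
      using repcos z by blast
    have pc: "p \<in> carrier M" using p Psub by blast
    have "lift R M P h = fdiff R (fdiff R (fbasis R l (p \<oplus>\<^bsub>M\<^esub> (x \<oplus>\<^bsub>M\<^esub> y))) (fbasis R l x)) (fbasis R l y)"
      using R2 x y s p cos_in[OF z] by (simp add: lift_fdiff[OF rR] lift_fbasis[OF M P])
    also have "\<dots> = (\<lambda>k. (fdiff R (fdiff R (fbasis R l (p \<oplus>\<^bsub>M\<^esub> (x \<oplus>\<^bsub>M\<^esub> y))) (fbasis R l p)) (fbasis R l (x \<oplus>\<^bsub>M\<^esub> y)) k
         \<oplus>\<^bsub>R\<^esub> fbasis R l p k) \<oplus>\<^bsub>R\<^esub> fdiff R (fdiff R (fbasis R l (x \<oplus>\<^bsub>M\<^esub> y)) (fbasis R l x)) (fbasis R l y) k)"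
      by (rule ext, unfold fdiff_def, rule id1) (auto intro: cvals_fbasis[OF rR, unfolded cvals_def, rule_format])
    also have "\<dots> \<in> ?T"
      using R2 x y z pc p PN by (intro comb sumrel inG) auto
    finally show ?thesis .
  next
    case R4
    obtain x where x: "x \<in> carrier M" "C = P +>\<^bsub>M\<^esub> x" "rep C = x" using repc R4 by blast
    have w: "r \<odot>\<^bsub>M\<^esub> x \<in> carrier M" using x R4 M by (simp add: module.smult_closed)
    have s: "(\<Union>y\<in>C. P +>\<^bsub>M\<^esub> (r \<odot>\<^bsub>M\<^esub> y)) = P +>\<^bsub>M\<^esub> (r \<odot>\<^bsub>M\<^esub> x)"
      using cos_smult[OF M P x(1) R4(2)] x by simp
    obtain p where p: "p \<in> P" "rep (P +>\<^bsub>M\<^esub> (r \<odot>\<^bsub>M\<^esub> x)) = p \<oplus>\<^bsub>M\<^esub> (r \<odot>\<^bsub>M\<^esub> x)"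
      using repcos w by blast
    have pc: "p \<in> carrier M" using p Psub by blast
    have "lift R M P h = fdiff R (fbasis R l (p \<oplus>\<^bsub>M\<^esub> (r \<odot>\<^bsub>M\<^esub> x))) (fscale R r (fbasis R l x))"
      using R4 x s p cos_in[OF w] by (simp add: lift_fdiff[OF rR] lift_fscale[OF rR] lift_fbasis[OF M P])
    also have "\<dots> = (\<lambda>k. (fdiff R (fdiff R (fbasis R l (p \<oplus>\<^bsub>M\<^esub> (r \<odot>\<^bsub>M\<^esub> x))) (fbasis R l p)) (fbasis R l (r \<odot>\<^bsub>M\<^esub> x)) k
         \<oplus>\<^bsub>R\<^esub> fbasis R l p k) \<oplus>\<^bsub>R\<^esub> fdiff R (fbasis R l (r \<odot>\<^bsub>M\<^esub> x)) (fscale R r (fbasis R l x)) k)"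
      by (rule ext, unfold fdiff_def fscale_def, rule id2)
        (auto intro: cvals_fbasis[OF rR, unfolded cvals_def, rule_format] R4(2))
    also have "\<dots> \<in> ?T"
    proof (intro comb sumrel inG)
      show "fdiff R (fbasis R l (r \<odot>\<^bsub>M\<^esub> x)) (fscale R r (fbasis R l x)) \<in> ?T"
        using R4 x by (intro inR) (unfold tensor_rels_def, blast)
    qed (use R4 x w pc p PN in auto)
    finally show ?thesis .
  qed
qed

lemma resid_sup:
  assumes R: "cring R" and M: "module R M" and P: "submodule P R M" and N: "submodule N R M"
    and PN: "P \<subseteq> N" and s: "s \<in> carrier L" and u: "u \<in> carrier M"
    and ti: "tensor_in_image R L ((\<lambda>n. P +>\<^bsub>M\<^esub> n) ` N) (quot_module R M P) s (P +>\<^bsub>M\<^esub> u)"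
  shows "tensor_in_image R L N M s u"
proof -
  interpret cring R by fact
  have rR: "ring R" by (rule ring_axioms)
  let ?T = "rspan R ({fbasis R l n | l n. l \<in> carrier L \<and> n \<in> N} \<union> tensor_rels R L M)"
  have Nsub: "N \<subseteq> carrier M" using N by (rule submodule.axioms(1)[THEN subgroup.subset, simplified])
  have Psub: "P \<subseteq> carrier M" using Nsub PN by blast
  have cv: "cvals R x" if "x \<in> ?T" for x
    by (rule rspan_cvals[OF rR _ that]) (rule cvals_gens[OF rR])
  have "lift R M P (fbasis R s (P +>\<^bsub>M\<^esub> u)) \<in> ?T \<and> True"
    apply (rule rspan_map[where Q = "\<lambda>_. True" and f = "fbasis R s (P +>\<^bsub>M\<^esub> u)"])
    using ti unfolding tensor_in_image_def
    by (auto simp: lift_zero lift_add[OF rR] lift_smult[OF rR] intro: lift_gen[OF R M P N PN])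
  then have "lift R M P (fbasis R s (P +>\<^bsub>M\<^esub> u)) \<in> ?T" by simp
  moreover obtain p where p: "p \<in> P" "rep (P +>\<^bsub>M\<^esub> u) = p \<oplus>\<^bsub>M\<^esub> u"
    using cos_elem[OF cos_rep(1)[OF M P u]] by blast
  ultimately have a: "fbasis R s (p \<oplus>\<^bsub>M\<^esub> u) \<in> ?T"
    by (simp add: lift_fbasis[OF M P cos_in[OF u]])
  have b: "fbasis R s p \<in> ?T" using p PN s by (intro rspan.gen) blast
  have pc: "p \<in> carrier M" using p Psub by blast
  have c: "fdiff R (fdiff R (fbasis R s (p \<oplus>\<^bsub>M\<^esub> u)) (fbasis R s p)) (fbasis R s u) \<in> ?T"
    using s pc u by (intro rspan.gen) (unfold tensor_rels_def, blast)
  have ab: "fdiff R (fbasis R s (p \<oplus>\<^bsub>M\<^esub> u)) (fbasis R s p) \<in> ?T"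
    using rspan_fdiff[OF rR a b] cv a b unfolding cvals_def by blast
  have "fdiff R (fdiff R (fbasis R s (p \<oplus>\<^bsub>M\<^esub> u)) (fbasis R s p))
     (fdiff R (fdiff R (fbasis R s (p \<oplus>\<^bsub>M\<^esub> u)) (fbasis R s p)) (fbasis R s u)) \<in> ?T"
    using rspan_fdiff[OF rR ab c] cv ab c unfolding cvals_def by blast
  moreover have "fdiff R (fdiff R (fbasis R s (p \<oplus>\<^bsub>M\<^esub> u)) (fbasis R s p))
     (fdiff R (fdiff R (fbasis R s (p \<oplus>\<^bsub>M\<^esub> u)) (fbasis R s p)) (fbasis R s u)) = fbasis R s u"
    by (rule ext, unfold fdiff_def, rule id3[symmetric])
       (auto intro: cvals_fbasis[OF rR, unfolded cvals_def, rule_format])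
  ultimately show ?thesis unfolding tensor_in_image_def by simp
qed

definition push :: "('a, 'x) ring_scheme \<Rightarrow> ('m \<Rightarrow> 'n) \<Rightarrow> ('l \<times> 'm \<Rightarrow> 'a) \<Rightarrow> ('l \<times> 'n \<Rightarrow> 'a)" where
  "push R g f = (\<lambda>k. finsum R (\<lambda>m. f (fst k, m)) {m. g m = snd k \<and> f (fst k, m) \<noteq> \<zero>\<^bsub>R\<^esub>})"

definition QP :: "('a, 'x) ring_scheme \<Rightarrow> ('k \<Rightarrow> 'a) \<Rightarrow> bool" where
  "QP R f \<longleftrightarrow> cvals R f \<and> finite {k. f k \<noteq> \<zero>\<^bsub>R\<^esub>}"

lemma fin_slice:
  assumes "finite {k. f k \<noteq> z}"
  shows "finite {m. f (l, m) \<noteq> z}"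
proof -
  have "{m. f (l, m) \<noteq> z} \<subseteq> snd ` {k. f k \<noteq> z}" by force
  then show ?thesis using assms finite_surj by blast
qed

lemma push_eq:
  assumes "ring R" "cvals R f" "finite B" "{m. g m = m' \<and> f (l, m) \<noteq> \<zero>\<^bsub>R\<^esub>} \<subseteq> B" "B \<subseteq> {m. g m = m'}"
  shows "push R g f (l, m') = finsum R (\<lambda>m. f (l, m)) B"
proof -
  interpret ring R by fact
  show ?thesis unfolding push_def fst_conv snd_conv
    by (rule add.finprod_mono_neutral_cong_left) (use assms in \<open>auto simp: cvals_def\<close>)
qed

lemma push_add:
  assumes "ring R" "QP R f" "QP R h"
  shows "push R g (\<lambda>k. f k \<oplus>\<^bsub>R\<^esub> h k) = (\<lambda>k. push R g f k \<oplus>\<^bsub>R\<^esub> push R g h k)"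
proof -
  interpret ring R by fact
  have "push R g (\<lambda>k. f k \<oplus>\<^bsub>R\<^esub> h k) (l, m') = push R g f (l, m') \<oplus>\<^bsub>R\<^esub> push R g h (l, m')" for l m'
  proof -
  let ?B = "{m. g m = m' \<and> (f (l, m) \<noteq> \<zero>\<^bsub>R\<^esub> \<or> h (l, m) \<noteq> \<zero>\<^bsub>R\<^esub>)}"
  have fin: "finite ?B"
    using fin_slice[of f] fin_slice[of h] assms(2,3) unfolding QP_def
    by (rule_tac finite_subset[of _ "{m. f (l, m) \<noteq> \<zero>\<^bsub>R\<^esub>} \<union> {m. h (l, m) \<noteq> \<zero>\<^bsub>R\<^esub>}"]) auto
  have cf: "cvals R f" "cvals R h" using assms unfolding QP_def by auto
  then have cfh: "cvals R (\<lambda>k. f k \<oplus>\<^bsub>R\<^esub> h k)" by (simp add: cvals_def)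
  have "push R g (\<lambda>k. f k \<oplus>\<^bsub>R\<^esub> h k) (l, m') = finsum R (\<lambda>m. f (l, m) \<oplus>\<^bsub>R\<^esub> h (l, m)) ?B"
    by (rule push_eq[OF assms(1) cfh fin]) auto
  also have "\<dots> = finsum R (\<lambda>m. f (l, m)) ?B \<oplus>\<^bsub>R\<^esub> finsum R (\<lambda>m. h (l, m)) ?B"
    by (rule finsum_addf) (use cf in \<open>auto simp: cvals_def\<close>)
  also have "\<dots> = push R g f (l, m') \<oplus>\<^bsub>R\<^esub> push R g h (l, m')"
  proof -
    have "push R g f (l, m') = finsum R (\<lambda>m. f (l, m)) ?B" by (rule push_eq[OF assms(1) cf(1) fin]) auto
    moreover have "push R g h (l, m') = finsum R (\<lambda>m. h (l, m)) ?B" by (rule push_eq[OF assms(1) cf(2) fin]) auto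
    ultimately show ?thesis by simp
  qed
  finally show ?thesis .
  qed
  then show ?thesis by (auto simp: fun_eq_iff)
qed

lemma push_smult:
  assumes "ring R" "QP R f" "r \<in> carrier R"
  shows "push R g (\<lambda>k. r \<otimes>\<^bsub>R\<^esub> f k) = (\<lambda>k. r \<otimes>\<^bsub>R\<^esub> push R g f k)"
proof -
  interpret ring R by fact
  have "push R g (\<lambda>k. r \<otimes>\<^bsub>R\<^esub> f k) (l, m') = r \<otimes>\<^bsub>R\<^esub> push R g f (l, m')" for l m'
  proof -
  let ?B = "{m. g m = m' \<and> f (l, m) \<noteq> \<zero>\<^bsub>R\<^esub>}"
  have fin: "finite ?B"
    using fin_slice[of f] assms(2) unfolding QP_def
    by (rule_tac finite_subset[of _ "{m. f (l, m) \<noteq> \<zero>\<^bsub>R\<^esub>}"]) auto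
  have cf: "cvals R f" using assms unfolding QP_def by auto
  then have cfh: "cvals R (\<lambda>k. r \<otimes>\<^bsub>R\<^esub> f k)" using assms(3) by (simp add: cvals_def)
  have "push R g (\<lambda>k. r \<otimes>\<^bsub>R\<^esub> f k) (l, m') = finsum R (\<lambda>m. r \<otimes>\<^bsub>R\<^esub> f (l, m)) ?B"
    by (rule push_eq[OF assms(1) cfh fin]) (auto simp: assms(3))
  also have "\<dots> = r \<otimes>\<^bsub>R\<^esub> finsum R (\<lambda>m. f (l, m)) ?B"
    by (rule finsum_rdistr[symmetric]) (use cf fin assms(3) in \<open>auto simp: cvals_def\<close>)
  also have "\<dots> = r \<otimes>\<^bsub>R\<^esub> push R g f (l, m')"
    by (simp add: push_def)
  finally show ?thesis .
  qed
  then show ?thesis by (auto simp: fun_eq_iff)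
qed

lemma push_zero: assumes "ring R" shows "push R g (\<lambda>_. \<zero>\<^bsub>R\<^esub>) = (\<lambda>_. \<zero>\<^bsub>R\<^esub>)"
proof -
  interpret ring R by fact
  show ?thesis by (simp add: push_def fun_eq_iff)
qed

lemma QP_add: "ring R \<Longrightarrow> QP R f \<Longrightarrow> QP R h \<Longrightarrow> QP R (\<lambda>k. f k \<oplus>\<^bsub>R\<^esub> h k)"
  unfolding QP_def cvals_def
  by (auto intro: finite_subset[of _ "{k. f k \<noteq> \<zero>\<^bsub>R\<^esub>} \<union> {k. h k \<noteq> \<zero>\<^bsub>R\<^esub>}"] simp: ring.ring_simprules)

lemma QP_smult: "ring R \<Longrightarrow> r \<in> carrier R \<Longrightarrow> QP R f \<Longrightarrow> QP R (\<lambda>k. r \<otimes>\<^bsub>R\<^esub> f k)"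
  unfolding QP_def cvals_def
  by (auto intro: finite_subset[of _ "{k. f k \<noteq> \<zero>\<^bsub>R\<^esub>}"] simp: ring.ring_simprules)

lemma QP_zero: "ring R \<Longrightarrow> QP R (\<lambda>_. \<zero>\<^bsub>R\<^esub>)"
  by (simp add: QP_def cvals_def ring.ring_simprules)

lemma QP_fbasis: "ring R \<Longrightarrow> QP R (fbasis R l m)"
  unfolding QP_def using cvals_fbasis[of R l m]
  by (auto simp: fbasis_def intro: finite_subset[of _ "{(l, m)}"])

lemma fdiff_eq: "ring R \<Longrightarrow> cvals R f \<Longrightarrow> cvals R h \<Longrightarrow>
   fdiff R f h = (\<lambda>k. f k \<oplus>\<^bsub>R\<^esub> ((\<ominus>\<^bsub>R\<^esub> \<one>\<^bsub>R\<^esub>) \<otimes>\<^bsub>R\<^esub> h k))"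
  by (simp add: fdiff_def fun_eq_iff cvals_def ring.ring_simprules ring.l_minus a_minus_def)

lemma QP_fdiff: assumes "ring R" "QP R f" "QP R h" shows "QP R (fdiff R f h)"
proof -
  have "fdiff R f h = (\<lambda>k. f k \<oplus>\<^bsub>R\<^esub> ((\<ominus>\<^bsub>R\<^esub> \<one>\<^bsub>R\<^esub>) \<otimes>\<^bsub>R\<^esub> h k))"
    using fdiff_eq[OF assms(1)] assms(2,3) unfolding QP_def by blast
  moreover have "QP R (\<lambda>k. f k \<oplus>\<^bsub>R\<^esub> ((\<ominus>\<^bsub>R\<^esub> \<one>\<^bsub>R\<^esub>) \<otimes>\<^bsub>R\<^esub> h k))"
    by (rule QP_add[OF assms(1,2) QP_smult[OF assms(1) _ assms(3)]]) (simp add: assms(1) ring.ring_simprules)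
  ultimately show ?thesis by simp
qed

lemma push_fbasis:
  assumes "ring R"
  shows "push R g (fbasis R l m) = fbasis R l (g m)"
proof -
  interpret ring R by fact
  have cv: "cvals R (fbasis R l m)" by (rule cvals_fbasis[OF assms])
  have "push R g (fbasis R l m) (l', m') = fbasis R l (g m) (l', m')" for l' m'
  proof (cases "l' = l \<and> g m = m'")
    case True
    have "push R g (fbasis R l m) (l', m') = finsum R (\<lambda>m0. fbasis R l m (l', m0)) {m}"
      by (rule push_eq[OF assms cv]) (use True in \<open>auto simp: fbasis_def\<close>)
    also have "\<dots> = \<one>\<^bsub>R\<^esub>" using True by (simp add: fbasis_def)
    finally show ?thesis using True by (simp add: fbasis_def)
  next
    case False
    have "push R g (fbasis R l m) (l', m') = finsum R (\<lambda>m0. fbasis R l m (l', m0)) {}"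
      by (rule push_eq[OF assms cv]) (use False in \<open>auto simp: fbasis_def\<close>)
    also have "\<dots> = \<zero>\<^bsub>R\<^esub>" by simp
    finally show ?thesis using False by (auto simp: fbasis_def)
  qed
  then show ?thesis by (auto simp: fun_eq_iff)
qed

lemma cvals_push: assumes "ring R" "cvals R f" shows "cvals R (push R g f)"
proof -
  interpret ring R by fact
  show ?thesis using assms(2) unfolding cvals_def push_def by (auto intro: finsum_closed)
qed

lemma push_fdiff:
  assumes "ring R" "QP R f" "QP R h"
  shows "push R g (fdiff R f h) = fdiff R (push R g f) (push R g h)"
proof -
  interpret ring R by fact
  have c: "cvals R f" "cvals R h" using assms unfolding QP_def by auto
  have m: "\<ominus>\<^bsub>R\<^esub> \<one>\<^bsub>R\<^esub> \<in> carrier R" by simp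
  have "push R g (fdiff R f h) = push R g (\<lambda>k. f k \<oplus>\<^bsub>R\<^esub> ((\<ominus>\<^bsub>R\<^esub> \<one>\<^bsub>R\<^esub>) \<otimes>\<^bsub>R\<^esub> h k))"
    using fdiff_eq[OF assms(1) c] by simp
  also have "\<dots> = (\<lambda>k. push R g f k \<oplus>\<^bsub>R\<^esub> ((\<ominus>\<^bsub>R\<^esub> \<one>\<^bsub>R\<^esub>) \<otimes>\<^bsub>R\<^esub> push R g h k))"
    by (simp add: push_add[OF assms(1,2) QP_smult[OF assms(1) m assms(3)]] push_smult[OF assms(1,3) m])
  also have "\<dots> = fdiff R (push R g f) (push R g h)"
    using fdiff_eq[OF assms(1) cvals_push[OF assms(1) c(1), of g] cvals_push[OF assms(1) c(2), of g]] by simp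
  finally show ?thesis .
qed

lemma push_fscale:
  assumes "ring R" "QP R f" "r \<in> carrier R"
  shows "push R g (fscale R r f) = fscale R r (push R g f)"
  using push_smult[OF assms] by (simp add: fscale_def)

lemma QP_fscale: "ring R \<Longrightarrow> r \<in> carrier R \<Longrightarrow> QP R f \<Longrightarrow> QP R (fscale R r f)"
  unfolding fscale_def by (rule QP_smult)

lemma push_gen:
  assumes R: "ring R"
    and gc: "\<And>x. x \<in> carrier M \<Longrightarrow> g x \<in> carrier M'"
    and ga: "\<And>x y. x \<in> carrier M \<Longrightarrow> y \<in> carrier M \<Longrightarrow> g (x \<oplus>\<^bsub>M\<^esub> y) = g x \<oplus>\<^bsub>M'\<^esub> g y"
    and gs: "\<And>r x. r \<in> carrier R \<Longrightarrow> x \<in> carrier M \<Longrightarrow> g (r \<odot>\<^bsub>M\<^esub> x) = r \<odot>\<^bsub>M'\<^esub> g x"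
    and h: "h \<in> {fbasis R l n | l n. l \<in> carrier L \<and> n \<in> N} \<union> tensor_rels R L M"
  shows "push R g h \<in> rspan R ({fbasis R l n | l n. l \<in> carrier L \<and> n \<in> g ` N} \<union> tensor_rels R L M') \<and> QP R h"
    (is "_ \<in> ?T \<and> _")
proof -
  note Q = QP_fbasis[OF R] QP_fdiff[OF R] QP_fscale[OF R]
  note pu = push_fbasis[OF R] push_fdiff[OF R] push_fscale[OF R]
  from h consider
      (G) l n where "h = fbasis R l n" "l \<in> carrier L" "n \<in> N"
    | (R1) l l' m where "h = fdiff R (fdiff R (fbasis R (l \<oplus>\<^bsub>L\<^esub> l') m) (fbasis R l m)) (fbasis R l' m)"
        "l \<in> carrier L" "l' \<in> carrier L" "m \<in> carrier M"
    | (R2) l m m' where "h = fdiff R (fdiff R (fbasis R l (m \<oplus>\<^bsub>M\<^esub> m')) (fbasis R l m)) (fbasis R l m')"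
        "l \<in> carrier L" "m \<in> carrier M" "m' \<in> carrier M"
    | (R3) r l m where "h = fdiff R (fbasis R (r \<odot>\<^bsub>L\<^esub> l) m) (fscale R r (fbasis R l m))"
        "r \<in> carrier R" "l \<in> carrier L" "m \<in> carrier M"
    | (R4) r l m where "h = fdiff R (fbasis R l (r \<odot>\<^bsub>M\<^esub> m)) (fscale R r (fbasis R l m))"
        "r \<in> carrier R" "l \<in> carrier L" "m \<in> carrier M"
    unfolding tensor_rels_def by (elim UnE CollectE exE conjE; blast)
  then show ?thesis
  proof cases
    case G
    then show ?thesis by (auto simp: pu Q intro!: rspan.gen)
  next
    case R1
    have "push R g h = fdiff R (fdiff R (fbasis R (l \<oplus>\<^bsub>L\<^esub> l') (g m)) (fbasis R l (g m))) (fbasis R l' (g m))"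
      using R1 by (simp add: pu Q)
    moreover have "\<dots> \<in> ?T" using R1 gc by (intro rspan.gen) (unfold tensor_rels_def, blast)
    ultimately show ?thesis using R1 by (simp add: Q)
  next
    case R2
    have "push R g h = fdiff R (fdiff R (fbasis R l (g m \<oplus>\<^bsub>M'\<^esub> g m')) (fbasis R l (g m))) (fbasis R l (g m'))"
      using R2 by (simp add: pu Q ga)
    moreover have "\<dots> \<in> ?T" using R2 gc by (intro rspan.gen) (unfold tensor_rels_def, blast)
    ultimately show ?thesis using R2 by (simp add: Q)
  next
    case R3
    have "push R g h = fdiff R (fbasis R (r \<odot>\<^bsub>L\<^esub> l) (g m)) (fscale R r (fbasis R l (g m)))"
      using R3 by (simp add: pu Q)
    moreover have "\<dots> \<in> ?T" using R3 gc by (intro rspan.gen) (unfold tensor_rels_def, blast)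
    ultimately show ?thesis using R3 by (simp add: Q)
  next
    case R4
    have "push R g h = fdiff R (fbasis R l (r \<odot>\<^bsub>M'\<^esub> g m)) (fscale R r (fbasis R l (g m)))"
      using R4 by (simp add: pu Q gs)
    moreover have "\<dots> \<in> ?T" using R4 gc by (intro rspan.gen) (unfold tensor_rels_def, blast)
    ultimately show ?thesis using R4 by (simp add: Q)
  qed
qed

lemma push_main:
  assumes R: "ring R"
    and gc: "\<And>x. x \<in> carrier M \<Longrightarrow> g x \<in> carrier M'"
    and ga: "\<And>x y. x \<in> carrier M \<Longrightarrow> y \<in> carrier M \<Longrightarrow> g (x \<oplus>\<^bsub>M\<^esub> y) = g x \<oplus>\<^bsub>M'\<^esub> g y"
    and gs: "\<And>r x. r \<in> carrier R \<Longrightarrow> x \<in> carrier M \<Longrightarrow> g (r \<odot>\<^bsub>M\<^esub> x) = r \<odot>\<^bsub>M'\<^esub> g x"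
    and ti: "tensor_in_image R L N M s u"
  shows "tensor_in_image R L (g ` N) M' s (g u)"
proof -
  have "push R g (fbasis R s u) \<in> rspan R ({fbasis R l n | l n. l \<in> carrier L \<and> n \<in> g ` N} \<union> tensor_rels R L M') \<and> QP R (fbasis R s u)"
    apply (rule rspan_map[where Q = "QP R" and f = "fbasis R s u" and H = "{fbasis R l n | l n. l \<in> carrier L \<and> n \<in> N} \<union> tensor_rels R L M"])
    apply (rule push_zero[OF R])
    apply (rule QP_zero[OF R])
    apply (rule push_gen[OF R gc ga gs]; assumption)
    apply (simp add: push_add[OF R] QP_add[OF R])
    apply (simp add: push_smult[OF R] QP_smult[OF R])
    using ti unfolding tensor_in_image_def apply simp
    done
  then show ?thesis unfolding tensor_in_image_def by (simp add: push_fbasis[OF R])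
qed

theorem proposition7p4:
  fixes R :: "('a, 'x) ring_scheme" and L :: "('a, 'l, 'y) module_scheme" and S :: "'l set"
  assumes "cring R" and "module R L" and "S \<subseteq> carrier L"
  shows "(\<forall>(M :: ('a, 'm, 'z) module_scheme) (M' :: ('a, 'n, 'w) module_scheme) g N.
            module R M \<and> module R M' \<and> rlinear R M M' g \<and> submodule N R M \<longrightarrow>
            g ` subset_cl R L S N M \<subseteq> subset_cl R L S (g ` N) M')
       \<and> (\<forall>(M :: ('a, 'm, 'z) module_scheme) N P.
            module R M \<and> submodule P R M \<and> submodule N R M \<and> P \<subseteq> N \<longrightarrow>
            subset_cl R L S N M =
              {x \<in> carrier M. P +>\<^bsub>M\<^esub> x \<in>
                 subset_cl R L S ((\<lambda>n. P +>\<^bsub>M\<^esub> n) ` N) (quot_module R M P)})"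
proof -
  interpret cring R by fact
  have rR: "ring R" by (rule ring_axioms)
  have part1: "g ` subset_cl R L S N M \<subseteq> subset_cl R L S (g ` N) M'"
    if "rlinear R M M' g" for M :: "('a, 'm, 'z) module_scheme" and M' :: "('a, 'n, 'w) module_scheme" and g N
  proof
    fix y assume "y \<in> g ` subset_cl R L S N M"
    then obtain u where u: "y = g u" "u \<in> carrier M" "\<forall>s\<in>S. tensor_in_image R L N M s u"
      unfolding subset_cl_def by blast
    have gc: "\<And>x. x \<in> carrier M \<Longrightarrow> g x \<in> carrier M'" using that unfolding rlinear_def by blast
    have ga: "\<And>x y. x \<in> carrier M \<Longrightarrow> y \<in> carrier M \<Longrightarrow> g (x \<oplus>\<^bsub>M\<^esub> y) = g x \<oplus>\<^bsub>M'\<^esub> g y"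
      using that unfolding rlinear_def by blast
    have gs: "\<And>r x. r \<in> carrier R \<Longrightarrow> x \<in> carrier M \<Longrightarrow> g (r \<odot>\<^bsub>M\<^esub> x) = r \<odot>\<^bsub>M'\<^esub> g x"
      using that unfolding rlinear_def by blast
    show "y \<in> subset_cl R L S (g ` N) M'"
      unfolding subset_cl_def using u gc by (auto intro: push_main[OF rR gc ga gs])
  qed
  have part2: "subset_cl R L S N M =
              {x \<in> carrier M. P +>\<^bsub>M\<^esub> x \<in>
                 subset_cl R L S ((\<lambda>n. P +>\<^bsub>M\<^esub> n) ` N) (quot_module R M P)}"
    if M: "module R M" and P: "submodule P R M" and N: "submodule N R M" and PN: "P \<subseteq> N"
    for M :: "('a, 'm, 'z) module_scheme" and N P
  proof
    have gc: "\<And>x. x \<in> carrier M \<Longrightarrow> P +>\<^bsub>M\<^esub> x \<in> carrier (quot_module R M P)"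
      by (simp add: quot_simps cos_in)
    have ga: "\<And>x y. x \<in> carrier M \<Longrightarrow> y \<in> carrier M \<Longrightarrow>
        P +>\<^bsub>M\<^esub> (x \<oplus>\<^bsub>M\<^esub> y) = (P +>\<^bsub>M\<^esub> x) \<oplus>\<^bsub>quot_module R M P\<^esub> (P +>\<^bsub>M\<^esub> y)"
      by (simp add: quot_simps cos_sum[OF M P])
    have gs: "\<And>r x. r \<in> carrier R \<Longrightarrow> x \<in> carrier M \<Longrightarrow>
        P +>\<^bsub>M\<^esub> (r \<odot>\<^bsub>M\<^esub> x) = r \<odot>\<^bsub>quot_module R M P\<^esub> (P +>\<^bsub>M\<^esub> x)"
      by (simp add: quot_simps cos_smult[OF M P])
    show "subset_cl R L S N M \<subseteq> {x \<in> carrier M. P +>\<^bsub>M\<^esub> x \<in>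
                 subset_cl R L S ((\<lambda>n. P +>\<^bsub>M\<^esub> n) ` N) (quot_module R M P)}"
    proof
      fix x assume "x \<in> subset_cl R L S N M"
      then have x: "x \<in> carrier M" "\<And>s. s \<in> S \<Longrightarrow> tensor_in_image R L N M s x"
        unfolding subset_cl_def by auto
      have "tensor_in_image R L ((\<lambda>n. P +>\<^bsub>M\<^esub> n) ` N) (quot_module R M P) s (P +>\<^bsub>M\<^esub> x)"
        if "s \<in> S" for s
        by (rule push_main[OF rR gc ga gs x(2)[OF that]])
      then show "x \<in> {x \<in> carrier M. P +>\<^bsub>M\<^esub> x \<in>
                 subset_cl R L S ((\<lambda>n. P +>\<^bsub>M\<^esub> n) ` N) (quot_module R M P)}"
        unfolding subset_cl_def using x(1) gc[OF x(1)] by blast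
    qed
    show "{x \<in> carrier M. P +>\<^bsub>M\<^esub> x \<in>
                 subset_cl R L S ((\<lambda>n. P +>\<^bsub>M\<^esub> n) ` N) (quot_module R M P)} \<subseteq> subset_cl R L S N M"
    proof
      fix x assume "x \<in> {x \<in> carrier M. P +>\<^bsub>M\<^esub> x \<in>
                 subset_cl R L S ((\<lambda>n. P +>\<^bsub>M\<^esub> n) ` N) (quot_module R M P)}"
      then have x: "x \<in> carrier M"
        "\<And>s. s \<in> S \<Longrightarrow> tensor_in_image R L ((\<lambda>n. P +>\<^bsub>M\<^esub> n) ` N) (quot_module R M P) s (P +>\<^bsub>M\<^esub> x)"
        unfolding subset_cl_def by auto
      have "tensor_in_image R L N M s x" if "s \<in> S" for s
        using resid_sup[OF assms(1) M P N PN _ x(1) x(2)[OF that]] that assms(3) by blast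
      then show "x \<in> subset_cl R L S N M" unfolding subset_cl_def using x(1) by blast
    qed
  qed
  show ?thesis using part1 part2 by blast
qed

end
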